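(* A (possibly infinite) tree $T$ is cat-win if and only if $T$ contains the infinite complete binary tree $B^{\omega}$ as a minor.
   Context: Cat Herding is played on a simple, possibly infinite graph $G$. The cat first places its token on a vertex. Then the players alternate, the herder moving first: the herder deletes one edge of the current graph, and then, unless the cat's current vertex has degree $0$ in the current graph, the cat moves its token along a finite path with at least one edge in the current graph to a different vertex. The cat is captured when its vertex has degree $0$ in the current graph. $G$ is cat-win if the cat has a strategy (including the choice of starting vertex) that is never captured, and herder-win if the herder has a strategy that eventually captures the cat. $B^{\omega}$ is the graph with vertex set $\{L,R\}^*$ (all finite words over $\{L,R\}$) and edges between $\alpha$ and $\alpha t$ for all $\alpha\in\{L,R\}^*$, $t\in\{L,R\}$. *)

theory Defs
  imports Main
begin

definition simple_graph :: "'a set \<Rightarrow> 'a set set \<Rightarrow> bool" where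
  "simple_graph V E \<longleftrightarrow> (\<forall>e\<in>E. \<exists>u v. u \<noteq> v \<and> u \<in> V \<and> v \<in> V \<and> e = {u, v})"

definition reach :: "'a set set \<Rightarrow> 'a \<Rightarrow> 'a \<Rightarrow> bool" where
  "reach F u v \<longleftrightarrow> (\<lambda>x y. {x, y} \<in> F)\<^sup>*\<^sup>* u v"

definition reach_within :: "'a set set \<Rightarrow> 'a set \<Rightarrow> 'a \<Rightarrow> 'a \<Rightarrow> bool" where
  "reach_within F S u v \<longleftrightarrow> (\<lambda>x y. x \<in> S \<and> y \<in> S \<and> {x, y} \<in> F)\<^sup>*\<^sup>* u v"

definition connected_set :: "'a set set \<Rightarrow> 'a set \<Rightarrow> bool" where
  "connected_set E S \<longleftrightarrow> (\<forall>u\<in>S. \<forall>v\<in>S. reach_within E S u v)"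

definition is_cycle :: "'a set set \<Rightarrow> 'a list \<Rightarrow> bool" where
  "is_cycle E cs \<longleftrightarrow> length cs \<ge> 3 \<and> distinct cs \<and>
     (\<forall>i. Suc i < length cs \<longrightarrow> {cs ! i, cs ! Suc i} \<in> E) \<and> {last cs, hd cs} \<in> E"

definition is_tree :: "'a set \<Rightarrow> 'a set set \<Rightarrow> bool" where
  "is_tree V E \<longleftrightarrow> simple_graph V E \<and> V \<noteq> {} \<and> connected_set E V \<and>
     (\<nexists>cs. set cs \<subseteq> V \<and> is_cycle E cs)"

definition is_minor :: "'b set \<Rightarrow> 'b set set \<Rightarrow> 'a set \<Rightarrow> 'a set set \<Rightarrow> bool" where
  "is_minor VH EH VG EG \<longleftrightarrow> (\<exists>br :: 'b \<Rightarrow> 'a set.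
     (\<forall>x\<in>VH. br x \<noteq> {} \<and> br x \<subseteq> VG \<and> connected_set EG (br x)) \<and>
     (\<forall>x\<in>VH. \<forall>y\<in>VH. x \<noteq> y \<longrightarrow> br x \<inter> br y = {}) \<and>
     (\<forall>x y. {x, y} \<in> EH \<longrightarrow> (\<exists>u\<in>br x. \<exists>v\<in>br y. {u, v} \<in> EG)))"

datatype dir = L | R

definition Bomega_V :: "dir list set" where
  "Bomega_V = UNIV"

definition Bomega_E :: "dir list set set" where
  "Bomega_E = {{\<alpha>, \<alpha> @ [t]} | \<alpha> t. True}"

text \<open>A play: the herder's deletions are es 0, es 1, ...; before the herder's n-th move
  the deleted edges are deleted es n. The cat's strategy sigma maps the list of
  the herder's moves so far to the cat's new vertex; the cat starts at v0.\<close>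

definition deleted :: "(nat \<Rightarrow> 'a set) \<Rightarrow> nat \<Rightarrow> 'a set set" where
  "deleted es n = es ` {..<n}"

definition cat_pos :: "'a \<Rightarrow> ('a set list \<Rightarrow> 'a) \<Rightarrow> (nat \<Rightarrow> 'a set) \<Rightarrow> nat \<Rightarrow> 'a" where
  "cat_pos v0 \<sigma> es n = (if n = 0 then v0 else \<sigma> (map es [0..<n]))"

definition isolated :: "'a set set \<Rightarrow> 'a \<Rightarrow> bool" where
  "isolated F v \<longleftrightarrow> (\<nexists>w. {v, w} \<in> F)"

text \<open>The cat wins: it has a starting vertex and a strategy such that, against every
  legal sequence of herder moves, it is never captured and always moves legally
  (along a path with at least one edge of the current graph to a different vertex).\<close>
definition cat_win :: "'a set \<Rightarrow> 'a set set \<Rightarrow> bool" where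
  "cat_win V E \<longleftrightarrow> (\<exists>v0 \<in> V. \<exists>\<sigma> :: 'a set list \<Rightarrow> 'a.
     \<not> isolated E v0 \<and>
     (\<forall>es :: nat \<Rightarrow> 'a set. \<forall>n.
        (\<forall>i\<le>n. es i \<in> E - deleted es i) \<longrightarrow>
          (let F = E - deleted es (Suc n); p = cat_pos v0 \<sigma> es n; q = cat_pos v0 \<sigma> es (Suc n)
           in \<not> isolated F p \<and> q \<noteq> p \<and> reach F p q)))"

end

theory Submission
  imports Defs
begin


lemma reach_refl[simp]: "reach F x x" by (simp add: reach_def)

lemma reach_edge: "{x,y} \<in> F \<Longrightarrow> reach F x y"
  by (simp add: reach_def r_into_rtranclp)

lemma reach_trans: "reach F x y \<Longrightarrow> reach F y z \<Longrightarrow> reach F x z"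
  unfolding reach_def by (rule rtranclp_trans)

lemma reach_sym: "reach F x y \<Longrightarrow> reach F y x"
  unfolding reach_def
proof (induction rule: rtranclp_induct)
  case base then show ?case by simp
next
  case (step y z)
  then have "{z,y} \<in> F" by (simp add: insert_commute)
  then show ?case using step by (meson converse_rtranclp_into_rtranclp)
qed

lemma reach_mono: "reach F x y \<Longrightarrow> F \<subseteq> G \<Longrightarrow> reach G x y"
  unfolding reach_def by (erule rtranclp_mono[THEN predicate2D, rotated]) auto

lemma reach_step: "reach F x y \<Longrightarrow> {y,z} \<in> F \<Longrightarrow> reach F x z"
  using reach_edge reach_trans by metis



lemma reach_induct[consumes 1, case_names base step]:
  assumes "reach F x y" "P x" "\<And>y z. reach F x y \<Longrightarrow> {y,z} \<in> F \<Longrightarrow> P y \<Longrightarrow> P z"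
  shows "P y"
  using assms(1) unfolding reach_def
proof (induction rule: rtranclp_induct)
  case base then show ?case using assms(2) by simp
next
  case (step y z) then show ?case using assms(3) unfolding reach_def by blast
qed

fun pth :: "'a set set \<Rightarrow> 'a list \<Rightarrow> bool" where
  "pth G (x # y # r) = ({x,y} \<in> G \<and> pth G (y # r))"
| "pth G _ = True"

lemma pth_reach: "pth G vs \<Longrightarrow> vs \<noteq> [] \<Longrightarrow> reach G (hd vs) (last vs)"
proof (induction G vs rule: pth.induct)
  case (1 G x y r)
  then have "reach G y (last (y # r))" by simp
  moreover have "reach G x y" using 1 by (simp add: reach_edge)
  ultimately show ?case using reach_trans by fastforce
qed auto

lemma pth_append1: "pth G vs \<Longrightarrow> vs \<noteq> [] \<Longrightarrow> {last vs, y} \<in> G \<Longrightarrow> pth G (vs @ [y])"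
  by (induction G vs rule: pth.induct) auto

lemma pth_prefix: "pth G (as @ bs) \<Longrightarrow> pth G as"
  by (induction G "as @ bs" arbitrary: as rule: pth.induct)
     (auto simp: Cons_eq_append_conv)

lemma pth_nth: "pth G vs \<Longrightarrow> Suc i < length vs \<Longrightarrow> {vs ! i, vs ! Suc i} \<in> G"
proof (induction G vs arbitrary: i rule: pth.induct)
  case (1 G x y r)
  then show ?case by (cases i) auto
qed auto

lemma reach_pth: "reach G x y \<Longrightarrow> \<exists>vs. vs \<noteq> [] \<and> hd vs = x \<and> last vs = y \<and> distinct vs \<and> pth G vs"
proof (induction rule: reach_induct)
  case base
  then show ?case by (intro exI[of _ "[x]"]) auto
next
  case (step y z)
  then obtain vs where vs: "vs \<noteq> []" "hd vs = x" "last vs = y" "distinct vs" "pth G vs" by blast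
  show ?case
  proof (cases "z \<in> set vs")
    case True
    then obtain as bs where sp: "vs = as @ z # bs" by (meson split_list)
    have "pth G (as @ [z])" using vs(5) sp pth_prefix[of G "as @ [z]" bs] by simp
    moreover have "hd (as @ [z]) = x" using vs(2) sp by (cases as) auto
    moreover have "distinct (as @ [z])" using vs(4) sp by simp
    ultimately show ?thesis by (intro exI[of _ "as @ [z]"]) auto
  next
    case False
    have "pth G (vs @ [z])" using pth_append1[OF vs(5) vs(1)] vs(3) step(2) by simp
    moreover have "hd (vs @ [z]) = x" using vs by simp
    ultimately show ?thesis using vs False by (intro exI[of _ "vs @ [z]"]) auto
  qed
qed



lemma edge_ne:
  assumes "simple_graph V E" "{u,v} \<in> E" shows "u \<noteq> v" "u \<in> V" "v \<in> V"
proof -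
  have "\<exists>a b. a \<noteq> b \<and> a \<in> V \<and> b \<in> V \<and> {u,v} = {a,b}"
    using assms unfolding simple_graph_def by (rule bspec)
  then obtain a b where ab: "a \<noteq> b" "a \<in> V" "b \<in> V" "{u,v} = {a,b}"
    by blast
  have "(u = a \<and> v = b) \<or> (u = b \<and> v = a)" using ab(4) by (simp add: doubleton_eq_iff)
  then show "u \<noteq> v" "u \<in> V" "v \<in> V" using ab(1,2,3) by blast+
qed
lemma T1:
  assumes sg: "simple_graph V E" and nc: "\<nexists>cs. set cs \<subseteq> V \<and> is_cycle E cs"
    and FE: "F \<subseteq> E" and uv: "{u,v} \<in> F"
  shows "\<not> reach (F - {{u,v}}) u v"
proof
  assume r: "reach (F - {{u,v}}) u v"
  obtain vs where vs: "vs \<noteq> []" "hd vs = u" "last vs = v" "distinct vs" "pth (F - {{u,v}}) vs"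
    using reach_pth[OF r] by (elim exE conjE)
  have uE: "{u,v} \<in> E" using FE uv by (rule subsetD)
  have une: "u \<noteq> v" using edge_ne[OF sg uE] by simp
  have len: "length vs \<ge> 2"
  proof (rule ccontr)
    assume "\<not> 2 \<le> length vs"
    moreover have "length vs > 0" using vs(1) by simp
    ultimately have "length vs = Suc 0" by linarith
    then have "\<exists>w. vs = [w]" by (simp add: length_Suc_conv)
    then obtain w where w: "vs = [w]" by (elim exE)
    then have "u = w" "v = w" using vs(2,3) by simp_all
    then show False using une by simp
  qed
  show False
  proof (cases "length vs = 2")
    case True
    then have "\<exists>a b. vs = [a,b]" by (simp add: length_Suc_conv numeral_2_eq_2) fast
    then obtain a b where ab: "vs = [a,b]" by (elim exE)
    then have "a = u" "b = v" using vs(2,3) by simp_all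
    then show False using vs(5) ab by simp
  next
    case False
    then have l3: "length vs \<ge> 3" using len by simp
    have edges: "\<forall>i. Suc i < length vs \<longrightarrow> {vs ! i, vs ! Suc i} \<in> E"
    proof (intro allI impI)
      fix i assume "Suc i < length vs"
      then have "{vs ! i, vs ! Suc i} \<in> F - {{u,v}}" using pth_nth[OF vs(5)] by simp
      then show "{vs ! i, vs ! Suc i} \<in> E" using FE by (meson DiffD1 subsetD)
    qed
    have "{last vs, hd vs} \<in> E" using vs(2,3) uE by (simp add: insert_commute)
    then have cyc: "is_cycle E vs" unfolding is_cycle_def using l3 vs(4) edges by simp
    have "set vs \<subseteq> V"
    proof
      fix w assume "w \<in> set vs"
      then obtain i where i: "i < length vs" "vs ! i = w" by (meson in_set_conv_nth)
      show "w \<in> V"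
      proof (cases "Suc i < length vs")
        case True
        then have "{vs ! i, vs ! Suc i} \<in> E" using edges by simp
        then show ?thesis using edge_ne(2)[OF sg] i(2) by simp
      next
        case False
        then have ii: "Suc (i - 1) < length vs" "Suc (i-1) = i" using i l3 by simp_all
        have "Suc (i-1) < length vs \<longrightarrow> {vs ! (i - 1), vs ! Suc (i - 1)} \<in> E" using edges by (rule spec)
        then have "{vs ! (i - 1), vs ! Suc (i - 1)} \<in> E" using ii(1) by (rule mp)
        then have "{vs ! (i - 1), vs ! i} \<in> E" using ii(2) by metis
        then show ?thesis using edge_ne(3)[OF sg] i(2) by simp
      qed
    qed
    then show False using nc cyc by simp
  qed
qed



lemma reach_split:
  assumes "reach (insert g G) x y"
  shows "reach G x y \<or> (\<exists>y1 y2. g = {y1,y2} \<and> reach G x y1 \<and> reach G y2 y)"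
  using assms
proof (induction rule: reach_induct)
  case base then show ?case by simp
next
  case (step y z)
  show ?case
  proof (cases "{y,z} \<in> G")
    case True
    from step(3) show ?thesis
    proof
      assume "reach G x y" then have "reach G x z" using True by (rule reach_step)
      then show ?thesis by (rule disjI1)
    next
      assume "\<exists>y1 y2. g = {y1,y2} \<and> reach G x y1 \<and> reach G y2 y"
      then obtain y1 y2 where "g = {y1,y2}" "reach G x y1" "reach G y2 y" by (elim exE conjE)
      moreover have "reach G y2 z" using \<open>reach G y2 y\<close> True by (rule reach_step)
      ultimately show ?thesis by blast
    qed
  next
    case False
    then have gyz: "g = {y,z}" using step(2) by simp
    show ?thesis
    proof (cases "reach G x y")
      case True
      then show ?thesis using gyz by (intro disjI2 exI[of _ y] exI[of _ z]) simp
    next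
      case False
      then obtain y1 y2 where y: "g = {y1,y2}" "reach G x y1" "reach G y2 y" using step(3) by (elim disjE exE conjE) simp_all
      have "z = y1 \<or> z = y2" using y(1) gyz by (simp add: doubleton_eq_iff) blast
      then show ?thesis
      proof
        assume "z = y1" then show ?thesis using y(2) by simp
      next
        assume "z = y2" then show ?thesis using y by (intro disjI2 exI[of _ y1] exI[of _ y2]) simp
      qed
    qed
  qed
qed

lemma two_sides:
  assumes "reach F b p" "{p,x} \<in> F"
  shows "reach (F - {{p,x}}) b p \<or> reach (F - {{p,x}}) b x"
proof -
  have "insert {p,x} (F - {{p,x}}) = F" using assms(2) by (rule insert_Diff)
  then have "reach (insert {p,x} (F - {{p,x}})) b p" using assms(1) by simp
  from reach_split[OF this] show ?thesis
  proof
    assume "\<exists>y1 y2. {p,x} = {y1,y2} \<and> reach (F - {{p, x}}) b y1 \<and> reach (F - {{p, x}}) y2 p"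
    then obtain y1 y2 where "{p,x} = {y1,y2}" "reach (F - {{p, x}}) b y1" by (elim exE conjE)
    moreover have "y1 = p \<or> y1 = x" using \<open>{p,x} = {y1,y2}\<close> by (simp add: doubleton_eq_iff) blast
    ultimately show ?thesis by (elim disjE) simp_all
  qed simp
qed

lemma reach_avoid:
  assumes "reach F x y" "w \<in> g" "\<not> reach F x w"
  shows "reach (F - {g}) x y"
  using assms(1)
proof (induction rule: reach_induct)
  case base then show ?case by simp
next
  case (step y z)
  have "reach F x z" using step(1,2) by (rule reach_step)
  have "{y,z} \<noteq> g"
  proof
    assume "{y,z} = g"
    then have "w = y \<or> w = z" using assms(2) by auto
    then show False using step(1) \<open>reach F x z\<close> assms(3) by auto
  qed
  then have "{y,z} \<in> F - {g}" using step(2) by simp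
  with step(3) show ?case by (rule reach_step)
qed

lemma first_edge:
  assumes "reach G p q" "p \<noteq> q"
  shows "\<exists>x. {p,x} \<in> G \<and> reach (G - {{p,x}}) x q"
  using assms
proof (induction rule: reach_induct)
  case base then show ?case by simp
next
  case (step y z)
  show ?case
  proof (cases "y = p")
    case True
    then have "{p,z} \<in> G" using step(2) by simp
    then show ?thesis by (intro exI[of _ z]) simp
  next
    case False
    then have "\<exists>x. {p,x} \<in> G \<and> reach (G - {{p,x}}) x y" using step(3) by simp
    then obtain x where x: "{p,x} \<in> G" "reach (G - {{p,x}}) x y" by (elim exE conjE)
    have "{y,z} \<noteq> {p,x}" using False step(4) by (auto simp: doubleton_eq_iff)
    then have "{y,z} \<in> G - {{p,x}}" using step(2) by simp
    then have "reach (G - {{p,x}}) x z" using x(2) reach_step by metis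
    then show ?thesis using x(1) by (intro exI[of _ x]) simp
  qed
qed

lemma pth_cross:
  assumes "pth G vs" "vs \<noteq> []" "\<not> pth (G - {g}) vs"
  shows "\<exists>ws. ws \<noteq> [] \<and> length ws < length vs \<and> pth (G - {g}) ws \<and> last ws = last vs \<and> hd ws \<in> g"
  using assms
proof (induction G vs rule: pth.induct)
  case (1 G x y r)
  have xy: "{x,y} \<in> G" using "1.prems"(1) by simp
  show ?case
  proof (cases "pth (G - {g}) (y # r)")
    case True
    then have "{x,y} \<notin> G - {g}" using "1.prems"(3) by simp
    then have "{x,y} = g" using xy by simp
    then have "y \<in> g" by blast
    then show ?thesis using True by (intro exI[of _ "y # r"]) simp
  next
    case False
    have p: "pth G (y # r)" using "1.prems"(1) by simp
    have "\<exists>ws. ws \<noteq> [] \<and> length ws < length (y # r) \<and> pth (G - {g}) ws \<and> last ws = last (y # r) \<and> hd ws \<in> g"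
      using "1.IH"[OF p _ False] by simp
    then obtain ws where "ws \<noteq> []" "length ws < length (y # r)" "pth (G - {g}) ws" "last ws = last (y # r)" "hd ws \<in> g"
      by (elim exE conjE)
    then show ?thesis by (intro exI[of _ ws]) simp
  qed
qed simp_all



definition legal :: "'a set set \<Rightarrow> 'a set list \<Rightarrow> bool" where
  "legal E hs \<longleftrightarrow> (\<forall>i<length hs. hs ! i \<in> E - set (take i hs))"

definition pos :: "'a \<Rightarrow> ('a set list \<Rightarrow> 'a) \<Rightarrow> 'a set list \<Rightarrow> 'a" where
  "pos v0 \<sigma> hs = (if hs = [] then v0 else \<sigma> hs)"

definition winning :: "'a set set \<Rightarrow> 'a \<Rightarrow> ('a set list \<Rightarrow> 'a) \<Rightarrow> bool" where
  "winning E v0 \<sigma> \<longleftrightarrow> (\<forall>hs e. legal E hs \<longrightarrow> e \<in> E - set hs \<longrightarrow>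
     pos v0 \<sigma> (hs @ [e]) \<noteq> pos v0 \<sigma> hs \<and> reach (E - set (hs @ [e])) (pos v0 \<sigma> hs) (pos v0 \<sigma> (hs @ [e])))"

lemma legal_Nil[simp]: "legal E []" by (simp add: legal_def)

lemma legal_snoc: "legal E (hs @ [e]) \<longleftrightarrow> legal E hs \<and> e \<in> E - set hs"
proof
  assume a: "legal E (hs @ [e])"
  have "\<forall>i<length hs. hs ! i \<in> E - set (take i hs)"
  proof (intro allI impI)
    fix i assume i: "i < length hs"
    then have "(hs @ [e]) ! i \<in> E - set (take i (hs @ [e]))" using a unfolding legal_def by simp
    then show "hs ! i \<in> E - set (take i hs)" using i by (simp add: nth_append)
  qed
  then have "legal E hs" unfolding legal_def by simp
  moreover have "\<forall>i<length (hs @ [e]). (hs @ [e]) ! i \<in> E - set (take i (hs @ [e]))" using a unfolding legal_def .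
  then have "(hs @ [e]) ! length hs \<in> E - set (take (length hs) (hs @ [e]))" by (metis length_append_singleton lessI)
  then have "e \<in> E - set hs" by simp
  ultimately show "legal E hs \<and> e \<in> E - set hs" by simp
next
  assume a: "legal E hs \<and> e \<in> E - set hs"
  show "legal E (hs @ [e])" unfolding legal_def
  proof (intro allI impI)
    fix i assume i: "i < length (hs @ [e])"
    show "(hs @ [e]) ! i \<in> E - set (take i (hs @ [e]))"
    proof (cases "i < length hs")
      case True
      then show ?thesis using a unfolding legal_def by (simp add: nth_append)
    next
      case False
      then have "i = length hs" using i by simp
      then show ?thesis using a by simp
    qed
  qed
qed

lemma cat_win_winning:
  assumes "cat_win V E"
  shows "\<exists>v0\<in>V. \<exists>\<sigma>. \<not> isolated E v0 \<and> winning E v0 \<sigma>"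
proof -
  obtain v0 \<sigma> where v0: "v0 \<in> V" "\<not> isolated E v0" and
    W: "\<And>es n. (\<forall>i\<le>n. es i \<in> E - deleted es i) \<Longrightarrow>
          (let F = E - deleted es (Suc n); p = cat_pos v0 \<sigma> es n; q = cat_pos v0 \<sigma> es (Suc n)
           in \<not> isolated F p \<and> q \<noteq> p \<and> reach F p q)"
    using assms unfolding cat_win_def by blast
  have "winning E v0 \<sigma>" unfolding winning_def
  proof (intro allI impI)
    fix hs e assume hs: "legal E hs" and e: "e \<in> E - set hs"
    define es where "es = (\<lambda>i. if i < length hs then hs ! i else e)"
    define n where "n = length hs"
    have del: "deleted es i = set (take i hs)" if "i \<le> n" for i
    proof -
      have "deleted es i = es ` {..<i}" by (simp add: deleted_def)
      also have "\<dots> = (!) hs ` {..<i}" using that unfolding es_def n_def by (intro image_cong) auto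
      also have "\<dots> = (!) hs ` {0..<i}" by (simp add: atLeast0LessThan)
      also have "\<dots> = set (take i hs)" using that unfolding n_def by (rule nth_image)
      finally show ?thesis .
    qed
    have leg: "\<forall>i\<le>n. es i \<in> E - deleted es i"
    proof (intro allI impI)
      fix i assume i: "i \<le> n"
      show "es i \<in> E - deleted es i"
      proof (cases "i < n")
        case True
        then show ?thesis using hs del[OF i] unfolding legal_def es_def n_def by simp
      next
        case False
        then have "i = n" using i by simp
        then show ?thesis using e del[OF i] unfolding es_def n_def by simp
      qed
    qed
    have "map es [0..<n] = map (\<lambda>i. hs ! i) [0..<n]" by (intro map_cong) (auto simp: es_def n_def)
    then have m1: "map es [0..<n] = hs" unfolding n_def by (simp add: map_nth)
    have m2: "map es [0..<Suc n] = hs @ [e]" using m1 by (simp add: es_def n_def)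
    have d2: "deleted es (Suc n) = set (hs @ [e])"
    proof -
      have "deleted es (Suc n) = es ` {..<Suc n}" by (simp add: deleted_def)
      also have "\<dots> = insert (es n) (es ` {..<n})" by (simp add: lessThan_Suc)
      also have "\<dots> = insert e (set hs)" using del[of n] by (simp add: deleted_def es_def n_def)
      finally show ?thesis by simp
    qed
    have c1: "cat_pos v0 \<sigma> es n = pos v0 \<sigma> hs"
      using m1 by (simp add: cat_pos_def pos_def n_def)
    have c2: "cat_pos v0 \<sigma> es (Suc n) = pos v0 \<sigma> (hs @ [e])"
      using m2 by (simp add: cat_pos_def pos_def)
    from W[OF leg] show "pos v0 \<sigma> (hs @ [e]) \<noteq> pos v0 \<sigma> hs \<and>
         reach (E - set (hs @ [e])) (pos v0 \<sigma> hs) (pos v0 \<sigma> (hs @ [e]))"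
      unfolding Let_def c1 c2 d2 by simp
  qed
  then show ?thesis using v0 by blast
qed



lemma reach_anti: "reach (E - D') x y \<Longrightarrow> D \<subseteq> D' \<Longrightarrow> reach (E - D) x y"
  by (erule reach_mono) blast

locale cg =
  fixes V :: "'a set" and E :: "'a set set" and v0 :: 'a and \<sigma> :: "'a set list \<Rightarrow> 'a"
  assumes sg: "simple_graph V E"
    and nc: "\<nexists>cs. set cs \<subseteq> V \<and> is_cycle E cs"
    and ni: "\<not> isolated E v0"
    and win: "winning E v0 \<sigma>"
begin

abbreviation P where "P \<equiv> pos v0 \<sigma>"

lemma move:
  assumes "legal E hs" "e \<in> E - set hs"
  shows "P (hs @ [e]) \<noteq> P hs" "reach (E - (set hs \<union> {e})) (P hs) (P (hs @ [e]))"
  using win assms unfolding winning_def by auto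

lemma exists_move:
  assumes "legal E hs"
  shows "\<exists>f. f \<in> E - set hs"
proof (cases hs rule: rev_cases)
  case Nil
  then obtain w where "{v0, w} \<in> E" using ni unfolding isolated_def by blast
  then show ?thesis using Nil by auto
next
  case (snoc hs0 e0)
  then have l0: "legal E hs0" "e0 \<in> E - set hs0" using assms legal_snoc by auto
  have r: "reach (E - (set hs0 \<union> {e0})) (P hs0) (P (hs0 @ [e0]))" using move(2)[OF l0] .
  have "P hs0 \<noteq> P (hs0 @ [e0])" using move(1)[OF l0] by simp
  from first_edge[OF r this] obtain x where "{P hs0, x} \<in> E - (set hs0 \<union> {e0})" by (elim exE conjE)
  then show ?thesis using snoc by (intro exI[of _ "{P hs0, x}"]) simp
qed

lemma Bprime:
  assumes "legal E hs"
  shows "\<exists>x. {P hs, x} \<in> E - set hs \<and> legal E (hs @ [{P hs, x}]) \<and>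
      reach (E - (set hs \<union> {{P hs, x}})) (P hs) (P (hs @ [{P hs, x}])) \<and>
      (\<exists>hs2. legal E hs2 \<and> set hs \<union> {{P hs, x}} \<subseteq> set hs2 \<and>
         reach (E - (set hs \<union> {{P hs, x}})) x (P hs2))"
proof -
  obtain f where f: "f \<in> E - set hs" using exists_move[OF assms] by (elim exE)
  define p where "p = P hs"
  define q where "q = P (hs @ [f])"
  have rq: "reach (E - (set hs \<union> {f})) p q" using move(2)[OF assms f] unfolding p_def q_def .
  have pq: "p \<noteq> q" using move(1)[OF assms f] unfolding p_def q_def by simp
  obtain x where x: "{p,x} \<in> E - (set hs \<union> {f})" "reach (E - (set hs \<union> {f}) - {{p,x}}) x q"
    using first_edge[OF rq pq] by (elim exE conjE)
  define e where "e = {p,x}"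
  have e1: "e \<in> E - set hs" "e \<noteq> f" using x(1) unfolding e_def by auto
  have l1: "legal E (hs @ [e])" using assms e1 legal_snoc by blast
  have r1: "reach (E - (set hs \<union> {e})) p (P (hs @ [e]))" using move(2)[OF assms e1(1)] unfolding p_def .
  have lf: "legal E (hs @ [f])" using assms f legal_snoc by blast
  have ef: "e \<in> E - set (hs @ [f])" using e1 by simp
  have l2: "legal E (hs @ [f] @ [e])" using lf ef legal_snoc[of E "hs @ [f]" e] by simp
  have r2: "reach (E - (set (hs @ [f]) \<union> {e})) q (P (hs @ [f] @ [e]))"
    using move(2)[OF lf ef] unfolding q_def by simp
  have sx: "E - (set hs \<union> {f}) - {{p,x}} = E - (set (hs @ [f]) \<union> {e})" unfolding e_def by auto
  have r3: "reach (E - (set (hs @ [f]) \<union> {e})) x (P (hs @ [f] @ [e]))"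
    using reach_trans[OF x(2)[unfolded sx] r2] .
  have r4: "reach (E - (set hs \<union> {e})) x (P (hs @ [f] @ [e]))"
    by (rule reach_anti[OF r3]) auto
  have s2: "set hs \<union> {e} \<subseteq> set (hs @ [f] @ [e])" by auto
  have "{P hs, x} \<in> E - set hs" using e1 unfolding e_def p_def by simp
  moreover have "legal E (hs @ [{P hs, x}])" using l1 unfolding e_def p_def by simp
  moreover have "reach (E - (set hs \<union> {{P hs, x}})) (P hs) (P (hs @ [{P hs, x}]))" using r1 unfolding e_def p_def by simp
  moreover have "legal E (hs @ [f] @ [{P hs, x}]) \<and> set hs \<union> {{P hs, x}} \<subseteq> set (hs @ [f] @ [{P hs, x}]) \<and>
         reach (E - (set hs \<union> {{P hs, x}})) x (P (hs @ [f] @ [{P hs, x}]))"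
    using l2 s2 r4 unfolding e_def p_def by simp
  ultimately show ?thesis by (intro exI[of _ x] conjI exI[of _ "hs @ [f] @ [{P hs, x}]"]) simp_all
qed

lemma orient:
  assumes "legal E s" "D \<subseteq> set s" "reach (E - D) a (P s)"
  shows "\<exists>e u c s1 s2. e = {u,c} \<and> e \<in> E - D \<and> reach (E - (D \<union> {e})) a u \<and>
     legal E s1 \<and> D \<union> {e} \<subseteq> set s1 \<and> reach (E - (D \<union> {e})) c (P s1) \<and>
     legal E s2 \<and> D \<union> {e} \<subseteq> set s2 \<and> reach (E - (D \<union> {e})) u (P s2)"
proof -
  define p where "p = P s"
  obtain x hs2 where x: "{p, x} \<in> E - set s" "legal E (s @ [{p, x}])"
      "reach (E - (set s \<union> {{p, x}})) p (P (s @ [{p, x}]))"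
      "legal E hs2" "set s \<union> {{p, x}} \<subseteq> set hs2" "reach (E - (set s \<union> {{p, x}})) x (P hs2)"
    using Bprime[OF assms(1)] unfolding p_def by (elim exE conjE)
  define e where "e = {p,x}"
  have eD: "e \<in> E - D" using x(1) assms(2) unfolding e_def by auto
  have ra: "reach (E - D) a p" using assms(3) unfolding p_def .
  have ex: "{p,x} \<in> E - D" using eD unfolding e_def .
  have seq: "E - D - {{p,x}} = E - (D \<union> {e})" unfolding e_def by blast
  from two_sides[OF ra ex]
  have ts: "reach (E - (D \<union> {e})) a p \<or> reach (E - (D \<union> {e})) a x"
    unfolding seq .
  have r1: "reach (E - (D \<union> {e})) p (P (s @ [e]))"
    unfolding e_def by (rule reach_anti[OF x(3)]) (use assms(2) in auto)
  have r2: "reach (E - (D \<union> {e})) x (P hs2)"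
    unfolding e_def by (rule reach_anti[OF x(6)]) (use assms(2) in auto)
  have l1: "D \<union> {e} \<subseteq> set (s @ [e])" using assms(2) by auto
  have l2: "D \<union> {e} \<subseteq> set hs2" using x(5) assms(2) unfolding e_def by auto
  from ts show ?thesis
  proof
    assume "reach (E - (D \<union> {e})) a p"
    then show ?thesis using eD r1 r2 l1 l2 x(2,4) unfolding e_def
      by (intro exI[of _ "{p,x}"] exI[of _ p] exI[of _ x] exI[of _ hs2] exI[of _ "s @ [{p,x}]"]) simp
  next
    assume "reach (E - (D \<union> {e})) a x"
    moreover have "e = {x,p}" unfolding e_def by (simp add: insert_commute)
    ultimately show ?thesis using eD r1 r2 l1 l2 x(2,4)
      by (intro exI[of _ "e"] exI[of _ x] exI[of _ p] exI[of _ "s @ [e]"] exI[of _ hs2]) (simp add: e_def)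
  qed
qed

end


context cg begin

lemma loop:
  assumes "legal E s" "D \<subseteq> set s" "reach (E - D) a (P s)"
    "pth (E - D) vs" "vs \<noteq> []" "hd vs = u" "last vs = a"
  shows "\<exists>g uL aL s''. g = {uL, aL} \<and> g \<in> E - D \<and> reach (E - (D \<union> {g})) a uL \<and>
     reach (E - (D \<union> {g})) a u \<and> legal E s'' \<and> D \<union> {g} \<subseteq> set s'' \<and>
     reach (E - (D \<union> {g})) aL (P s'')"
  using assms
proof (induction "length vs" arbitrary: s D u vs rule: less_induct)
  case less
  have rua: "reach (E - D) u a" using pth_reach[OF less.prems(4,5)] less.prems(6,7) by simp
  have rus: "reach (E - D) u (P s)" using reach_trans[OF rua less.prems(3)] .
  obtain e u' c s1 where o: "e = {u',c}" "e \<in> E - D" "reach (E - (D \<union> {e})) u u'"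
     "legal E s1" "D \<union> {e} \<subseteq> set s1" "reach (E - (D \<union> {e})) c (P s1)"
    using orient[OF less.prems(1,2) rus] by (elim exE conjE)
  show ?case
  proof (cases "reach (E - (D \<union> {e})) u a")
    case True
    have "reach (E - (D \<union> {e})) a u'" using reach_trans[OF reach_sym[OF True] o(3)] .
    moreover have "reach (E - (D \<union> {e})) a u" using reach_sym[OF True] .
    ultimately show ?thesis using o by (intro exI[of _ e] exI[of _ u'] exI[of _ c] exI[of _ s1]) simp
  next
    case False
    have seq: "E - D - {e} = E - (D \<union> {e})" by blast
    have np: "\<not> pth (E - D - {e}) vs"
    proof
      assume "pth (E - D - {e}) vs"
      then have "reach (E - D - {e}) u a" using pth_reach less.prems(5,6,7) by fastforce
      then show False using False seq by simp
    qed
    obtain ws where ws: "ws \<noteq> []" "length ws < length vs" "pth (E - D - {e}) ws" "last ws = last vs" "hd ws \<in> e"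
      using pth_cross[OF less.prems(4,5) np] by (elim exE conjE)
    have rwa: "reach (E - (D \<union> {e})) (hd ws) a" using pth_reach[OF ws(3,1)] ws(4) less.prems(7) seq by simp
    have hc: "hd ws = c"
    proof -
      have "hd ws = u' \<or> hd ws = c" using ws(5) o(1) by simp
      moreover have "hd ws \<noteq> u'"
      proof
        assume "hd ws = u'"
        then have "reach (E - (D \<union> {e})) u a" using reach_trans[OF o(3)] rwa by simp
        then show False using False by simp
      qed
      ultimately show ?thesis by simp
    qed
    have p1: "legal E s1" "D \<union> {e} \<subseteq> set s1" using o by simp_all
    have p3: "reach (E - (D \<union> {e})) a (P s1)"
      using reach_trans[OF reach_sym[OF rwa[unfolded hc]] o(6)] .
    have wl: "last ws = a" using ws(4) less.prems(7) by simp
    have p4: "pth (E - (D \<union> {e})) ws" using ws(3) seq by simp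
    obtain g uL aL s'' where IH: "g = {uL, aL}" "g \<in> E - (D \<union> {e})" "reach (E - (D \<union> {e} \<union> {g})) a uL"
      "reach (E - (D \<union> {e} \<union> {g})) a c" "legal E s''" "D \<union> {e} \<union> {g} \<subseteq> set s''"
      "reach (E - (D \<union> {e} \<union> {g})) aL (P s'')"
      using less.hyps[OF ws(2) p1 p3 p4 ws(1) hc wl] by (elim exE conjE)
    have gD: "g \<in> E - D" "g \<noteq> e" using IH(2) by simp_all
    have r1: "reach (E - (D \<union> {g})) a uL" by (rule reach_anti[OF IH(3)]) auto
    have r2: "reach (E - (D \<union> {g})) aL (P s'')" by (rule reach_anti[OF IH(7)]) auto
    have s2: "D \<union> {g} \<subseteq> set s''" using IH(6) by simp
    have ra_c: "reach (E - (D \<union> {g})) a c" by (rule reach_anti[OF IH(4)]) auto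
    have ecg: "{c, u'} \<in> E - (D \<union> {g})" using o(1,2) gD by (simp add: insert_commute)
    have nuL: "\<not> reach (E - (D \<union> {e})) u uL"
    proof
      assume "reach (E - (D \<union> {e})) u uL"
      moreover have "reach (E - (D \<union> {e})) uL a"
        using reach_sym[OF reach_anti[OF IH(3)]] by auto
      ultimately show False using False reach_trans by metis
    qed
    have uLg: "uL \<in> g" using IH(1) by simp
    have "reach (E - (D \<union> {e}) - {g}) u u'" using reach_avoid[OF o(3) uLg nuL] .
    then have ruu: "reach (E - (D \<union> {g})) u u'" by (rule reach_mono) blast
    have "reach (E - (D \<union> {g})) a u'" using reach_step[OF ra_c ecg] .
    then have "reach (E - (D \<union> {g})) a u" using reach_trans[OF _ reach_sym[OF ruu]] by simp
    then show ?thesis using IH(1) gD r1 r2 s2 IH(5)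
      by (intro exI[of _ g] exI[of _ uL] exI[of _ aL] exI[of _ s'']) simp
  qed
qed

lemma step:
  assumes "legal E s" "D \<subseteq> set s" "reach (E - D) a (P s)"
  shows "\<exists>eL uL cL hL eR uR cR hR. eL = {uL, cL} \<and> eR = {uR, cR} \<and> eL \<in> E - D \<and> eR \<in> E - D \<and> eL \<noteq> eR \<and>
     reach (E - (D \<union> {eL, eR})) a uL \<and> reach (E - (D \<union> {eL, eR})) a uR \<and>
     legal E hL \<and> D \<union> {eL} \<subseteq> set hL \<and> reach (E - (D \<union> {eL})) cL (P hL) \<and>
     legal E hR \<and> D \<union> {eR} \<subseteq> set hR \<and> reach (E - (D \<union> {eR})) cR (P hR)"
proof -
  obtain e u c s1 s2 where o: "e = {u,c}" "e \<in> E - D" "reach (E - (D \<union> {e})) a u"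
     "legal E s1" "D \<union> {e} \<subseteq> set s1" "reach (E - (D \<union> {e})) c (P s1)"
     "legal E s2" "D \<union> {e} \<subseteq> set s2" "reach (E - (D \<union> {e})) u (P s2)"
    using orient[OF assms] by (elim exE conjE)
  obtain vs where vs: "vs \<noteq> []" "hd vs = u" "last vs = a" "pth (E - (D \<union> {e})) vs"
    using reach_pth[OF reach_sym[OF o(3)]] by (elim exE conjE)
  have r2: "reach (E - (D \<union> {e})) a (P s2)" using reach_trans[OF o(3) o(9)] .
  obtain g uL aL s'' where L: "g = {uL, aL}" "g \<in> E - (D \<union> {e})" "reach (E - (D \<union> {e} \<union> {g})) a uL"
     "reach (E - (D \<union> {e} \<union> {g})) a u" "legal E s''" "D \<union> {e} \<union> {g} \<subseteq> set s''"
     "reach (E - (D \<union> {e} \<union> {g})) aL (P s'')"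
    using loop[OF o(7,8) r2 vs(4,1,2,3)] by (elim exE conjE)
  have se: "D \<union> {e} \<union> {g} = D \<union> {g, e}" by blast
  have a1: "reach (E - (D \<union> {g, e})) a uL" using L(3) se by simp
  have a2: "reach (E - (D \<union> {g, e})) a u" using L(4) se by simp
  have a3: "reach (E - (D \<union> {g})) aL (P s'')" by (rule reach_anti[OF L(7)]) auto
  have a4: "D \<union> {g} \<subseteq> set s''" using L(6) by simp
  have gD: "g \<in> E - D" "g \<noteq> e" using L(2) by simp_all
  show ?thesis using L(1) o(1,2,4,5,6) gD a1 a2 a3 a4 L(5)
    by (intro exI[of _ g] exI[of _ uL] exI[of _ aL] exI[of _ s''] exI[of _ e] exI[of _ u] exI[of _ c] exI[of _ s1]) simp
qed

end


lemma reach_within_sym: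
  assumes "reach_within E S x y" shows "reach_within E S y x"
  using assms unfolding reach_within_def
proof (induction rule: rtranclp_induct)
  case base then show ?case by simp
next
  case (step y z)
  then have "z \<in> S \<and> y \<in> S \<and> {z,y} \<in> E" by (simp add: insert_commute)
  then show ?case using step(3) by (rule converse_rtranclp_into_rtranclp)
qed

lemma comp_connected:
  assumes "F \<subseteq> E"
  shows "connected_set E {w. reach F a w}"
proof -
  let ?K = "{w. reach F a w}"
  have A: "reach_within E ?K a w" if "reach F a w" for w
    using that
  proof (induction rule: reach_induct)
    case base then show ?case by (simp add: reach_within_def)
  next
    case (step y z)
    have "reach F a z" using step(1,2) by (rule reach_step)
    then have e: "y \<in> ?K \<and> z \<in> ?K \<and> {y,z} \<in> E" using step(1,2) assms by auto
    show ?case using step(3) e unfolding reach_within_def by (rule rtranclp.rtrancl_into_rtrancl)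
  qed
  show ?thesis unfolding connected_set_def
  proof (intro ballI)
    fix u v assume "u \<in> ?K" "v \<in> ?K"
    then have "reach_within E ?K a u" "reach_within E ?K a v" using A by auto
    then have "reach_within E ?K u a" "reach_within E ?K a v" using reach_within_sym by auto
    then show "reach_within E ?K u v" unfolding reach_within_def by (rule rtranclp_trans)
  qed
qed

context cg begin

lemma comp_V:
  assumes "a \<in> V" "F \<subseteq> E" "reach F a w" shows "w \<in> V"
  using assms(3)
proof (induction rule: reach_induct)
  case base then show ?case using assms(1) .
next
  case (step y z)
  then have "{y,z} \<in> E" using assms(2) by auto
  then show ?case using edge_ne(3)[OF sg] by simp
qed

lemma T1D:
  assumes "{u,c} \<in> E - D" "reach (E - (D \<union> {{u,c}})) u c" shows False
proof -
  have "E - D \<subseteq> E" by blast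
  from T1[OF sg nc this assms(1)] have "\<not> reach (E - D - {{u,c}}) u c" .
  moreover have "E - D - {{u,c}} = E - (D \<union> {{u,c}})" by blast
  ultimately show False using assms(2) by simp
qed

lemma X2:
  assumes gt: "gt = {ut, ct}" "gt \<in> E - D" "gt \<in> G"
    and ru: "reach (E - (D \<union> G)) a ut"
    and w1: "reach (E - (D \<union> G)) a w" and w2: "reach (E - (D \<union> {gt})) ct w"
  shows False
proof -
  have sub: "D \<union> {gt} \<subseteq> D \<union> G" using gt(3) by blast
  have "reach (E - (D \<union> {gt})) a w" by (rule reach_anti[OF w1 sub])
  moreover have "reach (E - (D \<union> {gt})) ut a" using reach_sym[OF reach_anti[OF ru sub]] .
  ultimately have "reach (E - (D \<union> {gt})) ut ct" using reach_trans reach_sym[OF w2] by metis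
  then show False using T1D gt(1,2) by metis
qed

lemma X3:
  assumes gL: "gL = {uL, cL}" "gL \<in> E - D" and gR: "gR = {uR, cR}" "gR \<in> E - D" and ne: "gL \<noteq> gR"
    and ruL: "reach (E - (D \<union> {gL, gR})) a uL" and ruR: "reach (E - (D \<union> {gL, gR})) a uR"
    and w1: "reach (E - (D \<union> {gL})) cL w" and w2: "reach (E - (D \<union> {gR})) cR w"
  shows False
proof -
  let ?G = "E - (D \<union> {gL, gR})"
  have uu: "reach ?G uL uR" using reach_trans[OF reach_sym[OF ruL] ruR] .
  have GR: "?G \<subseteq> E - (D \<union> {gR})" by blast
  have GL: "?G \<subseteq> E - (D \<union> {gL})" by blast
  have eL: "{cL, uL} \<in> E - (D \<union> {gR})" using gL ne by (auto simp: insert_commute)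
  have uuR: "reach (E - (D \<union> {gR})) uL uR" using reach_mono[OF uu GR] .
  have H: False if "reach (E - (D \<union> {gR})) cR cL"
  proof -
    have "reach (E - (D \<union> {gR})) cR uL" using reach_step[OF that eL] .
    then have "reach (E - (D \<union> {gR})) cR uR" using uuR reach_trans by metis
    then have "reach (E - (D \<union> {gR})) uR cR" by (rule reach_sym)
    then show False using T1D gR by metis
  qed
  show False
  proof (cases "reach ?G cL w")
    case True
    then have "reach (E - (D \<union> {gR})) cL w" using GR reach_mono by metis
    then have "reach (E - (D \<union> {gR})) cR cL" using w2 reach_trans reach_sym by metis
    then show False by (rule H)
  next
    case False
    have ins: "E - (D \<union> {gL}) = insert gR ?G" using gR(2) ne by blast
    have "reach (insert gR ?G) cL w" using w1 ins by simp
    from reach_split[OF this] False obtain y1 y2 where y: "gR = {y1,y2}" "reach ?G cL y1" "reach ?G y2 w"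
      by (elim disjE exE conjE) simp_all
    have "y1 = uR \<or> y1 = cR" using y(1) gR(1) by (simp add: doubleton_eq_iff) blast
    then show False
    proof
      assume "y1 = uR"
      then have "reach ?G cL uL" using y(2) reach_sym[OF uu] reach_trans by metis
      then have "reach (E - (D \<union> {gL})) cL uL" using GL reach_mono by metis
      then have "reach (E - (D \<union> {gL})) uL cL" by (rule reach_sym)
      then show False using T1D gL by metis
    next
      assume "y1 = cR"
      then have "reach ?G cL cR" using y(2) by simp
      then have "reach (E - (D \<union> {gR})) cR cL" using GR reach_mono reach_sym by metis
      then show False by (rule H)
    qed
  qed
qed

end


type_synonym 'a cdata = "'a set \<times> 'a \<times> 'a \<times> 'a set list"

definition sel_t :: "('a cdata \<times> 'a cdata) \<Rightarrow> dir \<Rightarrow> 'a cdata" where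
  "sel_t r t = (if t = L then fst r else snd r)"

lemma sel_t_L[simp]: "sel_t r L = fst r" and sel_t_R[simp]: "sel_t r R = snd r"
  by (simp_all add: sel_t_def)

context cg begin

definition SP :: "'a set set \<Rightarrow> 'a \<Rightarrow> ('a cdata \<times> 'a cdata) \<Rightarrow> bool" where
  "SP D a r \<longleftrightarrow> (\<forall>t. fst (sel_t r t) = {fst (snd (sel_t r t)), fst (snd (snd (sel_t r t)))} \<and>
      fst (sel_t r t) \<in> E - D \<and>
      reach (E - (D \<union> {fst (fst r), fst (snd r)})) a (fst (snd (sel_t r t))) \<and>
      legal E (snd (snd (snd (sel_t r t)))) \<and>
      D \<union> {fst (sel_t r t)} \<subseteq> set (snd (snd (snd (sel_t r t)))) \<and>
      reach (E - (D \<union> {fst (sel_t r t)})) (fst (snd (snd (sel_t r t)))) (P (snd (snd (snd (sel_t r t)))))) \<and>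
    fst (fst r) \<noteq> fst (snd r)"

definition sel :: "'a set set \<Rightarrow> 'a \<Rightarrow> ('a cdata \<times> 'a cdata)" where
  "sel D a = (SOME r. SP D a r)"

lemma sel_SP:
  assumes "legal E s" "D \<subseteq> set s" "reach (E - D) a (P s)"
  shows "SP D a (sel D a)"
proof -
  obtain eL uL cL hL eR uR cR hR where st: "eL = {uL, cL}" "eR = {uR, cR}" "eL \<in> E - D" "eR \<in> E - D" "eL \<noteq> eR"
     "reach (E - (D \<union> {eL, eR})) a uL" "reach (E - (D \<union> {eL, eR})) a uR"
     "legal E hL" "D \<union> {eL} \<subseteq> set hL" "reach (E - (D \<union> {eL})) cL (P hL)"
     "legal E hR" "D \<union> {eR} \<subseteq> set hR" "reach (E - (D \<union> {eR})) cR (P hR)"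
    using step[OF assms] by (elim exE conjE)
  have "SP D a ((eL, uL, cL, hL), (eR, uR, cR, hR))"
    unfolding SP_def
  proof (intro conjI allI)
    fix t show "fst (sel_t ((eL, uL, cL, hL), eR, uR, cR, hR) t) =
          {fst (snd (sel_t ((eL, uL, cL, hL), eR, uR, cR, hR) t)), fst (snd (snd (sel_t ((eL, uL, cL, hL), eR, uR, cR, hR) t)))}"
      using st by (cases t) (simp_all add: sel_t_def)
  next
    fix t show "fst (sel_t ((eL, uL, cL, hL), eR, uR, cR, hR) t) \<in> E - D"
      using st by (cases t) (simp_all add: sel_t_def)
  next
    fix t show "reach (E - (D \<union> {fst (fst ((eL, uL, cL, hL), eR, uR, cR, hR)), fst (snd ((eL, uL, cL, hL), eR, uR, cR, hR))})) a
          (fst (snd (sel_t ((eL, uL, cL, hL), eR, uR, cR, hR) t)))"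
      using st by (cases t) (simp_all add: sel_t_def)
  next
    fix t show "legal E (snd (snd (snd (sel_t ((eL, uL, cL, hL), eR, uR, cR, hR) t))))"
      using st by (cases t) (simp_all add: sel_t_def)
  next
    fix t show "D \<union> {fst (sel_t ((eL, uL, cL, hL), eR, uR, cR, hR) t)} \<subseteq> set (snd (snd (snd (sel_t ((eL, uL, cL, hL), eR, uR, cR, hR) t))))"
      using st by (cases t) (simp_all add: sel_t_def)
  next
    fix t show "reach (E - (D \<union> {fst (sel_t ((eL, uL, cL, hL), eR, uR, cR, hR) t)}))
          (fst (snd (snd (sel_t ((eL, uL, cL, hL), eR, uR, cR, hR) t))))
          (P (snd (snd (snd (sel_t ((eL, uL, cL, hL), eR, uR, cR, hR) t)))))"
      using st by (cases t) (simp_all add: sel_t_def)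
  next
    show "fst (fst ((eL, uL, cL, hL), eR, uR, cR, hR)) \<noteq> fst (snd ((eL, uL, cL, hL), eR, uR, cR, hR))"
      using st by simp
  qed
  then show ?thesis unfolding sel_def by (rule someI)
qed

definition chd :: "'a set list \<times> 'a set set \<times> 'a \<Rightarrow> dir \<Rightarrow> 'a set list \<times> 'a set set \<times> 'a" where
  "chd d t = (let x = sel_t (sel (fst (snd d)) (snd (snd d))) t in
      (snd (snd (snd x)), fst (snd d) \<union> {fst x}, fst (snd (snd x))))"

definition nd :: "dir list \<Rightarrow> 'a set list \<times> 'a set set \<times> 'a" where
  "nd \<beta> = fold (\<lambda>t d. chd d t) \<beta> ([], {}, v0)"

definition Dn where "Dn \<beta> = fst (snd (nd \<beta>))"
definition an where "an \<beta> = snd (snd (nd \<beta>))"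
definition hn where "hn \<beta> = fst (nd \<beta>)"
definition rr where "rr \<beta> = sel (Dn \<beta>) (an \<beta>)"
definition eT where "eT \<beta> t = fst (sel_t (rr \<beta>) t)"
definition uT where "uT \<beta> t = fst (snd (sel_t (rr \<beta>) t))"
definition cT where "cT \<beta> t = fst (snd (snd (sel_t (rr \<beta>) t)))"
definition hT where "hT \<beta> t = snd (snd (snd (sel_t (rr \<beta>) t)))"

lemma nd_Nil: "Dn [] = {}" "an [] = v0" "hn [] = []"
  by (simp_all add: Dn_def an_def hn_def nd_def)

lemma nd_snoc: "Dn (\<beta> @ [t]) = Dn \<beta> \<union> {eT \<beta> t}" "an (\<beta> @ [t]) = cT \<beta> t" "hn (\<beta> @ [t]) = hT \<beta> t"
  by (simp_all add: Dn_def an_def hn_def nd_def chd_def Let_def eT_def cT_def hT_def rr_def)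

definition Inv where "Inv \<beta> \<longleftrightarrow> legal E (hn \<beta>) \<and> Dn \<beta> \<subseteq> set (hn \<beta>) \<and> reach (E - Dn \<beta>) (an \<beta>) (P (hn \<beta>)) \<and> an \<beta> \<in> V"

lemma SP_unfold:
  assumes "SP (Dn \<beta>) (an \<beta>) (rr \<beta>)"
  shows "eT \<beta> t = {uT \<beta> t, cT \<beta> t}" "eT \<beta> t \<in> E - Dn \<beta>"
    "reach (E - (Dn \<beta> \<union> {eT \<beta> L, eT \<beta> R})) (an \<beta>) (uT \<beta> t)"
    "legal E (hT \<beta> t)" "Dn \<beta> \<union> {eT \<beta> t} \<subseteq> set (hT \<beta> t)"
    "reach (E - (Dn \<beta> \<union> {eT \<beta> t})) (cT \<beta> t) (P (hT \<beta> t))"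
    "eT \<beta> L \<noteq> eT \<beta> R"
proof -
  have A: "fst (sel_t (rr \<beta>) t) = {fst (snd (sel_t (rr \<beta>) t)), fst (snd (snd (sel_t (rr \<beta>) t)))} \<and>
      fst (sel_t (rr \<beta>) t) \<in> E - Dn \<beta> \<and>
      reach (E - (Dn \<beta> \<union> {fst (fst (rr \<beta>)), fst (snd (rr \<beta>))})) (an \<beta>) (fst (snd (sel_t (rr \<beta>) t))) \<and>
      legal E (snd (snd (snd (sel_t (rr \<beta>) t)))) \<and>
      Dn \<beta> \<union> {fst (sel_t (rr \<beta>) t)} \<subseteq> set (snd (snd (snd (sel_t (rr \<beta>) t)))) \<and>
      reach (E - (Dn \<beta> \<union> {fst (sel_t (rr \<beta>) t)})) (fst (snd (snd (sel_t (rr \<beta>) t)))) (P (snd (snd (snd (sel_t (rr \<beta>) t)))))"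
    and B: "fst (fst (rr \<beta>)) \<noteq> fst (snd (rr \<beta>))"
    using assms unfolding SP_def by blast+
  have eL: "eT \<beta> L = fst (fst (rr \<beta>))" and eR: "eT \<beta> R = fst (snd (rr \<beta>))" by (simp_all add: eT_def)
  from A have a1: "eT \<beta> t = {uT \<beta> t, cT \<beta> t}" and a2: "eT \<beta> t \<in> E - Dn \<beta>"
    and a3: "reach (E - (Dn \<beta> \<union> {fst (fst (rr \<beta>)), fst (snd (rr \<beta>))})) (an \<beta>) (uT \<beta> t)"
    and a4: "legal E (hT \<beta> t)" and a5: "Dn \<beta> \<union> {eT \<beta> t} \<subseteq> set (hT \<beta> t)"
    and a6: "reach (E - (Dn \<beta> \<union> {eT \<beta> t})) (cT \<beta> t) (P (hT \<beta> t))"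
    unfolding eT_def uT_def cT_def hT_def by blast+
  show "eT \<beta> t = {uT \<beta> t, cT \<beta> t}" "eT \<beta> t \<in> E - Dn \<beta>"
    "legal E (hT \<beta> t)" "Dn \<beta> \<union> {eT \<beta> t} \<subseteq> set (hT \<beta> t)"
    "reach (E - (Dn \<beta> \<union> {eT \<beta> t})) (cT \<beta> t) (P (hT \<beta> t))"
    by (fact a1 a2 a4 a5 a6)+
  show "reach (E - (Dn \<beta> \<union> {eT \<beta> L, eT \<beta> R})) (an \<beta>) (uT \<beta> t)"
    unfolding eL eR by (fact a3)
  show "eT \<beta> L \<noteq> eT \<beta> R" using B eL eR by simp
qed

lemma Inv_all:
  assumes "v0 \<in> V" shows "Inv \<beta>"
proof (induction \<beta> rule: rev_induct)
  case Nil
  then show ?case using assms by (simp add: Inv_def nd_Nil pos_def)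
next
  case (snoc t \<beta>)
  have "SP (Dn \<beta>) (an \<beta>) (rr \<beta>)" unfolding rr_def using snoc unfolding Inv_def by (intro sel_SP[of "hn \<beta>"]) simp_all
  note S = SP_unfold[OF this]
  have "eT \<beta> t \<in> E" using S(2) by simp
  then have "cT \<beta> t \<in> V" using S(1) edge_ne(3)[OF sg] by metis
  then show ?case using S unfolding Inv_def nd_snoc by simp
qed

end


lemma dir_list_cases:
  fixes \<beta> \<gamma> :: "dir list"
  assumes "\<beta> \<noteq> \<gamma>"
  shows "(\<exists>t r. \<gamma> = \<beta> @ t # r) \<or> (\<exists>t r. \<beta> = \<gamma> @ t # r) \<or>
    (\<exists>\<rho> r1 r2. \<beta> = \<rho> @ L # r1 \<and> \<gamma> = \<rho> @ R # r2) \<or> (\<exists>\<rho> r1 r2. \<beta> = \<rho> @ R # r1 \<and> \<gamma> = \<rho> @ L # r2)"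
  using assms
proof (induction \<beta> arbitrary: \<gamma>)
  case Nil
  then obtain t r where "\<gamma> = t # r" by (cases \<gamma>) auto
  then show ?case by auto
next
  case (Cons a \<beta>')
  show ?case
  proof (cases \<gamma>)
    case Nil
    then show ?thesis by auto
  next
    case (Cons b \<gamma>')
    show ?thesis
    proof (cases "a = b")
      case True
      then have "\<beta>' \<noteq> \<gamma>'" using Cons Cons.prems by simp
      from Cons.IH[OF this] show ?thesis
      proof (elim disjE exE)
        fix t r assume "\<gamma>' = \<beta>' @ t # r" then show ?thesis using Cons True by auto
      next
        fix t r assume "\<beta>' = \<gamma>' @ t # r" then show ?thesis using Cons True by auto
      next
        fix \<rho> r1 r2 assume "\<beta>' = \<rho> @ L # r1 \<and> \<gamma>' = \<rho> @ R # r2"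
        then have "\<exists>\<rho>' r1' r2'. a # \<beta>' = \<rho>' @ L # r1' \<and> \<gamma> = \<rho>' @ R # r2'"
          using Cons True by (intro exI[of _ "a # \<rho>"] exI[of _ r1] exI[of _ r2]) simp
        then show ?thesis by blast
      next
        fix \<rho> r1 r2 assume "\<beta>' = \<rho> @ R # r1 \<and> \<gamma>' = \<rho> @ L # r2"
        then have "\<exists>\<rho>' r1' r2'. a # \<beta>' = \<rho>' @ R # r1' \<and> \<gamma> = \<rho>' @ L # r2'"
          using Cons True by (intro exI[of _ "a # \<rho>"] exI[of _ r1] exI[of _ r2]) simp
        then show ?thesis by blast
      qed
    next
      case False
      then have "(a = L \<and> b = R) \<or> (a = R \<and> b = L)" by (cases a; cases b) auto
      then show ?thesis
      proof
        assume "a = L \<and> b = R"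
        then have "\<exists>\<rho> r1 r2. a # \<beta>' = \<rho> @ L # r1 \<and> \<gamma> = \<rho> @ R # r2"
          using Cons by (intro exI[of _ "[]"] exI[of _ \<beta>'] exI[of _ \<gamma>']) simp
        then show ?thesis by blast
      next
        assume "a = R \<and> b = L"
        then have "\<exists>\<rho> r1 r2. a # \<beta>' = \<rho> @ R # r1 \<and> \<gamma> = \<rho> @ L # r2"
          using Cons by (intro exI[of _ "[]"] exI[of _ \<beta>'] exI[of _ \<gamma>']) simp
        then show ?thesis by blast
      qed
    qed
  qed
qed

locale cg2 = cg + assumes v0V: "v0 \<in> V"
begin

definition S where "S \<beta> = {w. reach (E - Dn \<beta>) (an \<beta>) w}"
definition br where "br \<beta> = {w. reach (E - (Dn \<beta> \<union> {eT \<beta> L, eT \<beta> R})) (an \<beta>) w}"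

lemma SPb: "SP (Dn \<beta>) (an \<beta>) (rr \<beta>)"
  using Inv_all[OF v0V, of \<beta>] unfolding rr_def Inv_def by (intro sel_SP[of "hn \<beta>"]) simp_all

lemmas SU = SP_unfold[OF SPb]

lemma a_reach_c: "reach (E - Dn \<beta>) (an \<beta>) (cT \<beta> t)"
proof -
  have "reach (E - Dn \<beta>) (an \<beta>) (uT \<beta> t)" by (rule reach_anti[OF SU(3)]) auto
  moreover have "{uT \<beta> t, cT \<beta> t} \<in> E - Dn \<beta>" using SU(1,2) by metis
  ultimately show ?thesis by (rule reach_step)
qed

lemma F1: "S (\<beta> @ [t]) \<subseteq> S \<beta>"
proof
  fix w assume "w \<in> S (\<beta> @ [t])"
  then have "reach (E - (Dn \<beta> \<union> {eT \<beta> t})) (cT \<beta> t) w" unfolding S_def nd_snoc by simp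
  then have "reach (E - Dn \<beta>) (cT \<beta> t) w" by (rule reach_anti) auto
  then have "reach (E - Dn \<beta>) (an \<beta>) w" using a_reach_c reach_trans by metis
  then show "w \<in> S \<beta>" unfolding S_def by simp
qed

lemma Smono: "S (\<beta> @ r) \<subseteq> S \<beta>"
proof (induction r rule: rev_induct)
  case Nil then show ?case by simp
next
  case (snoc t r)
  have "S ((\<beta> @ r) @ [t]) \<subseteq> S (\<beta> @ r)" by (rule F1)
  then show ?case using snoc by auto
qed

lemma br_S: "br \<beta> \<subseteq> S \<beta>"
  unfolding br_def S_def
proof
  fix w assume "w \<in> {w. reach (E - (Dn \<beta> \<union> {eT \<beta> L, eT \<beta> R})) (an \<beta>) w}"
  then have "reach (E - (Dn \<beta> \<union> {eT \<beta> L, eT \<beta> R})) (an \<beta>) w" by simp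
  then have "reach (E - Dn \<beta>) (an \<beta>) w" by (rule reach_anti) blast
  then show "w \<in> {w. reach (E - Dn \<beta>) (an \<beta>) w}" by simp
qed

lemma F3: "br \<beta> \<inter> S (\<beta> @ [t]) = {}"
proof (rule ccontr)
  assume "br \<beta> \<inter> S (\<beta> @ [t]) \<noteq> {}"
  then obtain w where w1: "reach (E - (Dn \<beta> \<union> {eT \<beta> L, eT \<beta> R})) (an \<beta>) w"
    and w2: "reach (E - (Dn \<beta> \<union> {eT \<beta> t})) (cT \<beta> t) w"
    unfolding br_def S_def nd_snoc by auto
  have G: "eT \<beta> t \<in> {eT \<beta> L, eT \<beta> R}" by (cases t) auto
  show False using X2[OF SU(1) SU(2) G SU(3) w1 w2] .
qed

lemma F4: "S (\<beta> @ [L]) \<inter> S (\<beta> @ [R]) = {}"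
proof (rule ccontr)
  assume "S (\<beta> @ [L]) \<inter> S (\<beta> @ [R]) \<noteq> {}"
  then obtain w where w1: "reach (E - (Dn \<beta> \<union> {eT \<beta> L})) (cT \<beta> L) w"
    and w2: "reach (E - (Dn \<beta> \<union> {eT \<beta> R})) (cT \<beta> R) w"
    unfolding S_def nd_snoc by auto
  show False using X3[OF SU(1) SU(2) SU(1) SU(2) SU(7) SU(3) SU(3) w1 w2] .
qed

lemma br_desc: "br (\<beta> @ t # r) \<subseteq> S (\<beta> @ [t])"
proof -
  have "br (\<beta> @ t # r) \<subseteq> S ((\<beta> @ [t]) @ r)" using br_S by simp
  also have "\<dots> \<subseteq> S (\<beta> @ [t])" by (rule Smono)
  finally show ?thesis .
qed

lemma br_disj: "\<beta> \<noteq> \<gamma> \<Longrightarrow> br \<beta> \<inter> br \<gamma> = {}"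
proof (drule dir_list_cases, elim disjE exE conjE)
  fix t r assume "\<gamma> = \<beta> @ t # r"
  then show ?thesis using br_desc[of \<beta> t r] F3[of \<beta> t] by blast
next
  fix t r assume "\<beta> = \<gamma> @ t # r"
  then show ?thesis using br_desc[of \<gamma> t r] F3[of \<gamma> t] by blast
next
  fix \<rho> r1 r2 assume "\<beta> = \<rho> @ L # r1" "\<gamma> = \<rho> @ R # r2"
  then show ?thesis using br_desc[of \<rho> L r1] br_desc[of \<rho> R r2] F4[of \<rho>] by blast
next
  fix \<rho> r1 r2 assume "\<beta> = \<rho> @ R # r1" "\<gamma> = \<rho> @ L # r2"
  then show ?thesis using br_desc[of \<rho> L r2] br_desc[of \<rho> R r1] F4[of \<rho>] by blast
qed

lemma minor: "is_minor Bomega_V Bomega_E V E"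
  unfolding is_minor_def
proof (intro exI[of _ br] conjI ballI allI impI)
  fix x :: "dir list"
  have "an x \<in> br x" unfolding br_def by simp
  then show "br x \<noteq> {}" by blast
  show "br x \<subseteq> V"
  proof
    fix w assume "w \<in> br x"
    then have r: "reach (E - (Dn x \<union> {eT x L, eT x R})) (an x) w" unfolding br_def by simp
    have "an x \<in> V" using Inv_all[OF v0V] unfolding Inv_def by simp
    moreover have "E - (Dn x \<union> {eT x L, eT x R}) \<subseteq> E" by blast
    ultimately show "w \<in> V" using comp_V r by metis
  qed
  have "E - (Dn x \<union> {eT x L, eT x R}) \<subseteq> E" by blast
  then show "connected_set E (br x)" unfolding br_def by (rule comp_connected)
next
  fix x y :: "dir list" assume "x \<noteq> y" then show "br x \<inter> br y = {}" by (rule br_disj)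
next
  fix x y :: "dir list" assume "{x, y} \<in> Bomega_E"
  then have "\<exists>\<alpha> t. {x,y} = {\<alpha>, \<alpha> @ [t]}" unfolding Bomega_E_def by simp
  then obtain \<alpha> t where xy: "{x,y} = {\<alpha>, \<alpha> @ [t]}" by (elim exE)
  have u: "uT \<alpha> t \<in> br \<alpha>" using SU(3) unfolding br_def by simp
  have c: "cT \<alpha> t \<in> br (\<alpha> @ [t])" unfolding br_def nd_snoc by simp
  have e: "{uT \<alpha> t, cT \<alpha> t} \<in> E" using SU(2)[of \<alpha> t] unfolding SU(1)[of \<alpha> t] by simp
  have e': "{cT \<alpha> t, uT \<alpha> t} \<in> E" using e by (simp add: insert_commute)
  have "(x = \<alpha> \<and> y = \<alpha> @ [t]) \<or> (x = \<alpha> @ [t] \<and> y = \<alpha>)" using xy by (simp add: doubleton_eq_iff)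
  then show "\<exists>u\<in>br x. \<exists>v\<in>br y. {u, v} \<in> E"
  proof
    assume "x = \<alpha> \<and> y = \<alpha> @ [t]" then show ?thesis using u c e by (intro bexI[of _ "uT \<alpha> t"] bexI[of _ "cT \<alpha> t"]) simp_all
  next
    assume "x = \<alpha> @ [t] \<and> y = \<alpha>" then show ?thesis using u c e' by (intro bexI[of _ "cT \<alpha> t"] bexI[of _ "uT \<alpha> t"]) simp_all
  qed
qed

end


lemma reach_within_reach:
  assumes "reach_within E S x y" "\<forall>d\<in>Del. \<not> d \<subseteq> S"
  shows "reach (E - Del) x y"
  using assms(1) unfolding reach_within_def
proof (induction rule: rtranclp_induct)
  case base then show ?case by simp
next
  case (step y z)
  then have "{y,z} \<in> E - Del" using assms(2) by auto
  then show ?case using step(3) reach_step by metis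
qed

locale mm =
  fixes V :: "'a set" and E :: "'a set set" and br :: "dir list \<Rightarrow> 'a set"
  assumes sg: "simple_graph V E"
    and brV: "\<And>x. br x \<noteq> {} \<and> br x \<subseteq> V \<and> connected_set E (br x)"
    and brD: "\<And>x y. x \<noteq> y \<Longrightarrow> br x \<inter> br y = {}"
    and brE: "\<And>x y. {x, y} \<in> Bomega_E \<Longrightarrow> \<exists>u\<in>br x. \<exists>v\<in>br y. {u, v} \<in> E"
begin

definition U where "U \<alpha> = {w. \<exists>r. w \<in> br (\<alpha> @ r)}"

definition cn where "cn \<alpha> t = (SOME uv. fst uv \<in> br \<alpha> \<and> snd uv \<in> br (\<alpha> @ [t]) \<and> {fst uv, snd uv} \<in> E)"
definition cu where "cu \<alpha> t = fst (cn \<alpha> t)"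
definition cv where "cv \<alpha> t = snd (cn \<alpha> t)"

lemma cn_prop: "cu \<alpha> t \<in> br \<alpha> \<and> cv \<alpha> t \<in> br (\<alpha> @ [t]) \<and> {cu \<alpha> t, cv \<alpha> t} \<in> E"
proof -
  have "{\<alpha>, \<alpha> @ [t]} \<in> Bomega_E" unfolding Bomega_E_def by blast
  from brE[OF this] obtain u v where "u \<in> br \<alpha>" "v \<in> br (\<alpha> @ [t])" "{u,v} \<in> E" by blast
  then have "\<exists>uv. fst uv \<in> br \<alpha> \<and> snd uv \<in> br (\<alpha> @ [t]) \<and> {fst uv, snd uv} \<in> E"
    by (intro exI[of _ "(u,v)"]) simp
  then show ?thesis unfolding cu_def cv_def cn_def by (rule someI_ex)
qed

lemma br_U: "br (\<alpha> @ r) \<subseteq> U \<alpha>" unfolding U_def by blast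

lemma br_U0: "br \<alpha> \<subseteq> U \<alpha>" using br_U[of \<alpha> "[]"] by simp

lemma U_mono: "U (\<alpha> @ [t]) \<subseteq> U \<alpha>"
  unfolding U_def by auto

lemma U_disj: "U (\<alpha> @ [L]) \<inter> U (\<alpha> @ [R]) = {}"
proof (rule ccontr)
  assume "U (\<alpha> @ [L]) \<inter> U (\<alpha> @ [R]) \<noteq> {}"
  then obtain w r1 r2 where "w \<in> br (\<alpha> @ [L] @ r1)" "w \<in> br (\<alpha> @ [R] @ r2)" unfolding U_def by auto
  moreover have "\<alpha> @ [L] @ r1 \<noteq> \<alpha> @ [R] @ r2" by simp
  ultimately show False using brD by blast
qed

lemma br_U_disj: "br \<alpha> \<inter> U (\<alpha> @ [t]) = {}"
proof (rule ccontr)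
  assume "br \<alpha> \<inter> U (\<alpha> @ [t]) \<noteq> {}"
  then obtain w r where "w \<in> br \<alpha>" "w \<in> br (\<alpha> @ [t] @ r)" unfolding U_def by auto
  moreover have "\<alpha> \<noteq> \<alpha> @ [t] @ r" by simp
  ultimately show False using brD by blast
qed

lemma E_ne: "e \<in> E \<Longrightarrow> e \<noteq> {}"
  using sg unfolding simple_graph_def by blast

definition dch where "dch \<alpha> e = (if e \<subseteq> U (\<alpha> @ [L]) \<or> e = {cu \<alpha> L, cv \<alpha> L} then R else L)"
definition wd where "wd hs = fold (\<lambda>e \<alpha>. \<alpha> @ [dch \<alpha> e]) hs []"
definition ap where "ap \<alpha> = cu \<alpha> L"

lemma wd_snoc: "wd (hs @ [e]) = wd hs @ [dch (wd hs) e]" by (simp add: wd_def)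

lemma reach_in_br:
  assumes "x \<in> br \<beta>" "y \<in> br \<beta>" "\<forall>d\<in>Del. \<not> d \<subseteq> br \<beta>"
  shows "reach (E - Del) x y"
proof -
  have "reach_within E (br \<beta>) x y" using brV[of \<beta>] assms(1,2) unfolding connected_set_def by blast
  then show ?thesis using assms(3) by (rule reach_within_reach)
qed

lemma cat_step:
  assumes inv: "\<forall>d\<in>Del. \<not> d \<subseteq> U \<alpha>" and eE: "e \<in> E"
  shows "\<forall>d\<in>insert e Del. \<not> d \<subseteq> U (\<alpha> @ [dch \<alpha> e])"
    "reach (E - insert e Del) (ap \<alpha>) (ap (\<alpha> @ [dch \<alpha> e]))"
    "ap (\<alpha> @ [dch \<alpha> e]) \<noteq> ap \<alpha>"
proof -
  define t where "t = dch \<alpha> e"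
  have old: "\<forall>d\<in>Del. \<not> d \<subseteq> U (\<alpha> @ [t])" using inv U_mono by blast
  have cL: "cu \<alpha> L \<in> br \<alpha>" "cv \<alpha> L \<in> br (\<alpha> @ [L])" "{cu \<alpha> L, cv \<alpha> L} \<in> E" using cn_prop by auto
  have cR: "cu \<alpha> R \<in> br \<alpha>" "cv \<alpha> R \<in> br (\<alpha> @ [R])" "{cu \<alpha> R, cv \<alpha> R} \<in> E" using cn_prop by auto
  have ene: "e \<noteq> {}" using E_ne[OF eE] .
  have new: "\<not> e \<subseteq> U (\<alpha> @ [t])"
  proof (cases "e \<subseteq> U (\<alpha> @ [L]) \<or> e = {cu \<alpha> L, cv \<alpha> L}")
    case True
    then have tR: "t = R" unfolding t_def dch_def by simp
    from True show ?thesis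
    proof
      assume "e \<subseteq> U (\<alpha> @ [L])"
      then show ?thesis using tR U_disj[of \<alpha>] ene by blast
    next
      assume "e = {cu \<alpha> L, cv \<alpha> L}"
      moreover have "cv \<alpha> L \<notin> U (\<alpha> @ [R])" using cL(2) br_U0[of "\<alpha> @ [L]"] U_disj[of \<alpha>] by blast
      ultimately show ?thesis using tR by blast
    qed
  next
    case False
    then show ?thesis unfolding t_def dch_def by simp
  qed
  show "\<forall>d\<in>insert e Del. \<not> d \<subseteq> U (\<alpha> @ [dch \<alpha> e])" using old new unfolding t_def by simp
  have Dt: "\<forall>d\<in>insert e Del. \<not> d \<subseteq> br (\<alpha> @ [t])" using old new br_U0[of "\<alpha> @ [t]"] by blast
  have ap1: "ap (\<alpha> @ [t]) \<in> br (\<alpha> @ [t])" unfolding ap_def using cn_prop by blast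
  have ap0: "ap \<alpha> \<in> br \<alpha>" unfolding ap_def using cn_prop by blast
  show "ap (\<alpha> @ [dch \<alpha> e]) \<noteq> ap \<alpha>"
    using ap0 ap1 brD[of \<alpha> "\<alpha> @ [t]"] unfolding t_def by auto
  show "reach (E - insert e Del) (ap \<alpha>) (ap (\<alpha> @ [dch \<alpha> e]))"
  proof (cases "e \<subseteq> U (\<alpha> @ [L]) \<or> e = {cu \<alpha> L, cv \<alpha> L}")
    case False
    then have tL: "t = L" unfolding t_def dch_def by simp
    have ed: "{cu \<alpha> L, cv \<alpha> L} \<in> E - insert e Del"
    proof -
      have "{cu \<alpha> L, cv \<alpha> L} \<subseteq> U \<alpha>" using cL(1,2) br_U0[of \<alpha>] br_U[of \<alpha> "[L]"] by blast
      then have "{cu \<alpha> L, cv \<alpha> L} \<notin> Del" using inv by blast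
      then show ?thesis using False cL(3) by auto
    qed
    have r2: "reach (E - insert e Del) (cv \<alpha> L) (ap (\<alpha> @ [L]))"
      using reach_in_br[OF cL(2) ap1[unfolded tL] Dt[unfolded tL]] .
    have "reach (E - insert e Del) (ap \<alpha>) (ap (\<alpha> @ [L]))"
      using reach_trans[OF reach_edge[OF ed] r2] unfolding ap_def .
    then show ?thesis using tL unfolding t_def by simp
  next
    case True
    then have tR: "t = R" unfolding t_def dch_def by simp
    have eb: "\<not> e \<subseteq> br \<alpha>"
    proof
      assume eb: "e \<subseteq> br \<alpha>"
      from True show False
      proof
        assume "e \<subseteq> U (\<alpha> @ [L])" then show False using eb br_U_disj[of \<alpha> L] ene by blast
      next
        assume "e = {cu \<alpha> L, cv \<alpha> L}"
        then have "cv \<alpha> L \<in> br \<alpha>" using eb by blast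
        then show False using cL(2) brD[of \<alpha> "\<alpha> @ [L]"] by auto
      qed
    qed
    have D0: "\<forall>d\<in>insert e Del. \<not> d \<subseteq> br \<alpha>" using inv br_U0[of \<alpha>] eb by blast
    have r1: "reach (E - insert e Del) (ap \<alpha>) (cu \<alpha> R)" using reach_in_br[OF ap0 cR(1) D0] .
    have ed: "{cu \<alpha> R, cv \<alpha> R} \<in> E - insert e Del"
    proof -
      have "{cu \<alpha> R, cv \<alpha> R} \<subseteq> U \<alpha>" using cR(1,2) br_U0[of \<alpha>] br_U[of \<alpha> "[R]"] by blast
      then have "{cu \<alpha> R, cv \<alpha> R} \<notin> Del" using inv by blast
      moreover have "{cu \<alpha> R, cv \<alpha> R} \<noteq> e"
      proof
        assume er: "{cu \<alpha> R, cv \<alpha> R} = e"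
        from True show False
        proof
          assume "e \<subseteq> U (\<alpha> @ [L])"
          then have "cv \<alpha> R \<in> U (\<alpha> @ [L])" using er by blast
          then show False using cR(2) br_U0[of "\<alpha> @ [R]"] U_disj[of \<alpha>] by blast
        next
          assume "e = {cu \<alpha> L, cv \<alpha> L}"
          then have "cv \<alpha> R = cu \<alpha> L \<or> cv \<alpha> R = cv \<alpha> L" using er by blast
          then show False
          proof
            assume "cv \<alpha> R = cu \<alpha> L" then show False using cR(2) cL(1) brD[of \<alpha> "\<alpha> @ [R]"] by auto
          next
            assume "cv \<alpha> R = cv \<alpha> L" then show False using cR(2) cL(2) brD[of "\<alpha> @ [L]" "\<alpha> @ [R]"] by auto
          qed
        qed
      qed
      ultimately show ?thesis using cR(3) by simp
    qed
    have r3: "reach (E - insert e Del) (cv \<alpha> R) (ap (\<alpha> @ [R]))"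
      using reach_in_br[OF cR(2) ap1[unfolded tR] Dt[unfolded tR]] .
    have "reach (E - insert e Del) (ap \<alpha>) (ap (\<alpha> @ [R]))"
      using reach_trans[OF r1 reach_trans[OF reach_edge[OF ed] r3]] .
    then show ?thesis using tR unfolding t_def by simp
  qed
qed

end


context mm begin

lemma del_Suc: "deleted es (Suc k) = insert (es k) (deleted es k)"
  by (simp add: deleted_def lessThan_Suc)

lemma wd_Suc: "wd (map es [0..<Suc k]) = wd (map es [0..<k]) @ [dch (wd (map es [0..<k])) (es k)]"
  by (simp add: wd_snoc)

lemma cat_pos_ap: "cat_pos (ap []) (\<lambda>hs. ap (wd hs)) es k = ap (wd (map es [0..<k]))"
  by (simp add: cat_pos_def wd_def)

lemma inv_k:
  assumes "\<forall>i\<le>n. es i \<in> E - deleted es i" "k \<le> Suc n"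
  shows "\<forall>d\<in>deleted es k. \<not> d \<subseteq> U (wd (map es [0..<k]))"
  using assms(2)
proof (induction k)
  case 0 then show ?case by (simp add: deleted_def)
next
  case (Suc k)
  then have IH: "\<forall>d\<in>deleted es k. \<not> d \<subseteq> U (wd (map es [0..<k]))" by simp
  have "es k \<in> E" using assms(1) Suc.prems by simp
  from cat_step(1)[OF IH this] show ?case unfolding del_Suc wd_Suc .
qed

lemma cat_win_mm: "cat_win V E"
  unfolding cat_win_def
proof (intro bexI[of _ "ap []"] exI[of _ "\<lambda>hs. ap (wd hs)"] conjI allI impI)
  have c: "cu [] L \<in> br [] \<and> cv [] L \<in> br ([] @ [L]) \<and> {cu [] L, cv [] L} \<in> E" by (rule cn_prop)
  then show "ap [] \<in> V" using brV[of "[]"] unfolding ap_def by blast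
  show "\<not> isolated E (ap [])" using c unfolding isolated_def ap_def by blast
next
  fix es n assume leg: "\<forall>i\<le>n. es i \<in> E - deleted es i"
  have I: "\<forall>d\<in>deleted es n. \<not> d \<subseteq> U (wd (map es [0..<n]))" using inv_k[OF leg] by simp
  have eE: "es n \<in> E" using leg by simp
  define \<alpha> where "\<alpha> = wd (map es [0..<n])"
  have q: "cat_pos (ap []) (\<lambda>hs. ap (wd hs)) es (Suc n) = ap (\<alpha> @ [dch \<alpha> (es n)])"
    unfolding cat_pos_ap wd_Suc \<alpha>_def ..
  have p: "cat_pos (ap []) (\<lambda>hs. ap (wd hs)) es n = ap \<alpha>" unfolding cat_pos_ap \<alpha>_def ..
  have r: "reach (E - deleted es (Suc n)) (ap \<alpha>) (ap (\<alpha> @ [dch \<alpha> (es n)]))"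
    using cat_step(2)[OF I[folded \<alpha>_def] eE] unfolding del_Suc .
  have ne: "ap (\<alpha> @ [dch \<alpha> (es n)]) \<noteq> ap \<alpha>" using cat_step(3)[OF I[folded \<alpha>_def] eE] .
  have "\<not> isolated (E - deleted es (Suc n)) (ap \<alpha>)"
  proof -
    obtain x where "{ap \<alpha>, x} \<in> E - deleted es (Suc n)" using first_edge[OF r ne[symmetric]] by (elim exE conjE)
    then show ?thesis unfolding isolated_def by blast
  qed
  then show "let F = E - deleted es (Suc n); p = cat_pos (ap []) (\<lambda>hs. ap (wd hs)) es n;
        q = cat_pos (ap []) (\<lambda>hs. ap (wd hs)) es (Suc n) in \<not> isolated F p \<and> q \<noteq> p \<and> reach F p q"
    unfolding Let_def p q using ne r by simp
qed

end


theorem mainTheorem12: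
  fixes V :: "'a set" and E :: "'a set set"
  assumes "is_tree V E"
  shows "cat_win V E \<longleftrightarrow> is_minor Bomega_V Bomega_E V E"
proof
  have sg: "simple_graph V E" and nc: "\<nexists>cs. set cs \<subseteq> V \<and> is_cycle E cs"
    using assms unfolding is_tree_def by simp_all
  {
    assume "cat_win V E"
    then obtain v0 \<sigma> where v: "v0 \<in> V" "\<not> isolated E v0" "winning E v0 \<sigma>"
      using cat_win_winning by blast
    interpret cg2 V E v0 \<sigma> using sg nc v by unfold_locales
    show "is_minor Bomega_V Bomega_E V E" by (rule minor)
  }
  {
    assume "is_minor Bomega_V Bomega_E V E"
    then obtain br :: "dir list \<Rightarrow> 'a set" where
      b1: "\<forall>x\<in>Bomega_V. br x \<noteq> {} \<and> br x \<subseteq> V \<and> connected_set E (br x)" and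
      b2: "\<forall>x\<in>Bomega_V. \<forall>y\<in>Bomega_V. x \<noteq> y \<longrightarrow> br x \<inter> br y = {}" and
      b3: "\<forall>x y. {x, y} \<in> Bomega_E \<longrightarrow> (\<exists>u\<in>br x. \<exists>v\<in>br y. {u, v} \<in> E)"
      unfolding is_minor_def by blast
    interpret mm V E br
      using sg b1 b2 b3 unfolding Bomega_V_def by unfold_locales blast+
    show "cat_win V E" by (rule cat_win_mm)
  }
qed

end
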